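(* Let $(M,g,J)$ be almost Hermitian of even complex dimension $m=2n$, $n\geq1$, with complex spinor bundle $S^cM$ of a spin$^c$ structure, and let $\mathcal{V}=S_{n-1}\oplus S_n$. Then Clifford multiplication with $\Lambda^{1,1}M$-forms on $\mathcal{V}$ is injective: if $x\in M$, $\eta\in\Lambda^{1,1}_xM$ and $\gamma(\eta)\varphi=0$ for all $\varphi\in\mathcal{V}_x$, then $\eta=0$.
   Context: $\Omega=g(\cdot,J\cdot)$; $\gamma$ is Clifford multiplication; $S^cM=S_0\oplus\cdots\oplus S_m$ with $S_j$ the eigenbundle of $\gamma(\Omega)$ for eigenvalue $\mathbf{i}(m-2j)$. $\Lambda^{1,1}M$ denotes the bundle of real $J$-invariant $2$-forms. *)

theory Defs
  imports "HOL-Analysis.Analysis"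
begin

text \<open>The tangent space T_xM is a real Euclidean
space 'v (metric g = inner product); J is the almost complex structure at x.
The spinor space S^c_xM is the complex vector space complex^'k on which tangent
vectors act by Clifford multiplication gamma, an irreducible complex
representation of the Clifford algebra of (T_xM, g).\<close>

definition almost_hermitian :: "('v::euclidean_space \<Rightarrow> 'v) \<Rightarrow> bool" where
  "almost_hermitian J \<longleftrightarrow> linear J \<and> (\<forall>v. J (J v) = - v) \<and>
     (\<forall>u v. inner (J u) (J v) = inner u v)"

definition clifford_rep :: "('v::euclidean_space \<Rightarrow> complex^'k^'k) \<Rightarrow> bool" where
  "clifford_rep \<gamma> \<longleftrightarrow>
     (\<forall>u v. \<gamma> (u + v) = \<gamma> u + \<gamma> v) \<and>
     (\<forall>r v. \<gamma> (r *\<^sub>R v) = mat (complex_of_real r) ** \<gamma> v) \<and>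
     (\<forall>v. \<gamma> v ** \<gamma> v = mat (- complex_of_real ((norm v)\<^sup>2)))"

definition csubspace :: "(complex^'k) set \<Rightarrow> bool" where
  "csubspace W \<longleftrightarrow> 0 \<in> W \<and> (\<forall>x\<in>W. \<forall>y\<in>W. x + y \<in> W) \<and> (\<forall>c. \<forall>x\<in>W. c *s x \<in> W)"

definition irreducible_rep :: "('v \<Rightarrow> complex^'k^'k) \<Rightarrow> bool" where
  "irreducible_rep \<gamma> \<longleftrightarrow>
     (\<forall>W. csubspace W \<and> (\<forall>v. \<forall>x\<in>W. \<gamma> v *v x \<in> W) \<longrightarrow> W = {0} \<or> W = UNIV)"

definition spinor_rep :: "('v::euclidean_space \<Rightarrow> complex^'k^'k) \<Rightarrow> bool" where
  "spinor_rep \<gamma> \<longleftrightarrow> clifford_rep \<gamma> \<and> irreducible_rep \<gamma>"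

definition two_form :: "('v::euclidean_space \<Rightarrow> 'v \<Rightarrow> real) \<Rightarrow> bool" where
  "two_form \<eta> \<longleftrightarrow> (\<forall>u. linear (\<eta> u)) \<and> (\<forall>v. linear (\<lambda>u. \<eta> u v)) \<and> (\<forall>u v. \<eta> u v = - \<eta> v u)"

definition form11 :: "('v::euclidean_space \<Rightarrow> 'v) \<Rightarrow> ('v \<Rightarrow> 'v \<Rightarrow> real) \<Rightarrow> bool" where
  "form11 J \<eta> \<longleftrightarrow> two_form \<eta> \<and> (\<forall>u v. \<eta> (J u) (J v) = \<eta> u v)"

text \<open>Clifford multiplication with a 2-form: sum_{i<j} eta(e_i,e_j) e_i e_j over an
orthonormal basis, written as half the double sum (eta antisymmetric).\<close>
definition cliff2 :: "('v::euclidean_space \<Rightarrow> complex^'k^'k) \<Rightarrow> ('v \<Rightarrow> 'v \<Rightarrow> real) \<Rightarrow> complex^'k^'k" where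
  "cliff2 \<gamma> \<eta> = (\<Sum>b\<in>Basis. \<Sum>c\<in>Basis.
      mat (complex_of_real (\<eta> b c / 2)) ** (\<gamma> b ** \<gamma> c))"

definition kaehler_form :: "('v::euclidean_space \<Rightarrow> 'v) \<Rightarrow> 'v \<Rightarrow> 'v \<Rightarrow> real" where
  "kaehler_form J u v = inner u (J v)"

definition spinor_S :: "('v::euclidean_space \<Rightarrow> complex^'k^'k) \<Rightarrow> ('v \<Rightarrow> 'v) \<Rightarrow> nat \<Rightarrow> nat \<Rightarrow> (complex^'k) set" where
  "spinor_S \<gamma> J m j = {\<phi>. cliff2 \<gamma> (kaehler_form J) *v \<phi> =
        (\<i> * of_int (int m - 2 * int j)) *s \<phi>}"

end

theory Submission
  imports Defs
begin


lemma ofreal_smult: "(complex_of_real r) *s (v::complex^'k) = r *\<^sub>R v"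
  unfolding vec_eq_iff by (simp only: vector_smult_component vector_scaleR_component scaleR_conv_of_real[where 'a=complex]) simp

lemma mat_mult_vec: "mat c *v (x::complex^'k) = c *s x"
proof -
  have "\<And>i. (\<Sum>j\<in>UNIV. (if i = j then c else 0) * x $ j) = c * x$i"
    by (simp add: if_distrib[where f="\<lambda>a. a * _"] sum.delta cong: if_cong)
  then show ?thesis by (simp add: vec_eq_iff matrix_vector_mult_def mat_def)
qed

lemma smult_nonzero: "c *s (w::complex^'k) = 0 \<Longrightarrow> w \<noteq> 0 \<Longrightarrow> c = 0"
  by simp

locale cl =
  fixes \<gamma> :: "'v::euclidean_space \<Rightarrow> complex^'k^'k"
  assumes cr: "clifford_rep \<gamma>"
begin

lemma g_add: "\<gamma> (u + w) *v \<psi> = \<gamma> u *v \<psi> + \<gamma> w *v \<psi>"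
  using cr by (simp add: clifford_rep_def matrix_vector_mult_add_rdistrib)

lemma g_scale: "\<gamma> (r *\<^sub>R u) *v \<psi> = r *\<^sub>R (\<gamma> u *v \<psi>)"
  using cr by (simp add: clifford_rep_def mat_mult_vec ofreal_smult flip: matrix_vector_mul_assoc)

lemma g_sq: "\<gamma> u *v (\<gamma> u *v \<psi>) = - ((norm u)\<^sup>2 *\<^sub>R \<psi>)"
proof -
  have "\<gamma> u *v (\<gamma> u *v \<psi>) = mat (- complex_of_real ((norm u)\<^sup>2)) *v \<psi>"
    using cr by (simp add: clifford_rep_def matrix_vector_mul_assoc)
  also have "\<dots> = - ((norm u)\<^sup>2 *\<^sub>R \<psi>)"
    by (simp only: mat_mult_vec vector_smult_lneg ofreal_smult)
  finally show ?thesis .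
qed

lemma g_lin: "linear (\<lambda>u. \<gamma> u *v \<psi>)"
  by (rule linearI) (simp_all add: g_add g_scale)

lemma g_zero[simp]: "\<gamma> 0 *v \<psi> = 0"
  using g_scale[of 0 0 \<psi>] by simp

lemma g_neg: "\<gamma> (- u) *v \<psi> = - (\<gamma> u *v \<psi>)"
  using g_scale[of "-1" u \<psi>] by simp

lemma g_anti: "\<gamma> u *v (\<gamma> w *v \<psi>) = - (\<gamma> w *v (\<gamma> u *v \<psi>)) - (2 * inner u w) *\<^sub>R \<psi>"
proof -
  have "\<gamma> (u + w) *v (\<gamma> (u + w) *v \<psi>) = - ((norm (u+w))\<^sup>2 *\<^sub>R \<psi>)" by (rule g_sq)
  also have "(norm (u+w))\<^sup>2 = (norm u)\<^sup>2 + 2 * inner u w + (norm w)\<^sup>2"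
    by (simp add: power2_norm_eq_inner inner_add_left inner_add_right inner_commute)
  finally have "\<gamma> u *v (\<gamma> u *v \<psi>) + \<gamma> u *v (\<gamma> w *v \<psi>) + \<gamma> w *v (\<gamma> u *v \<psi>) + \<gamma> w *v (\<gamma> w *v \<psi>)
     = - (((norm u)\<^sup>2 + 2 * inner u w + (norm w)\<^sup>2) *\<^sub>R \<psi>)"
    by (simp add: g_add matrix_vector_right_distrib algebra_simps)
  then have "\<gamma> u *v (\<gamma> w *v \<psi>) + (\<gamma> w *v (\<gamma> u *v \<psi>) + (2 * inner u w) *\<^sub>R \<psi>) = 0"
    by (simp add: g_sq algebra_simps)
  then show ?thesis by (simp add: algebra_simps) (metis add.left_commute add_eq_0_iff)
qed

lemma v_add: "\<gamma> u *v (a + b) = \<gamma> u *v a + \<gamma> u *v b"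
  by (simp add: matrix_vector_right_distrib)
lemma v_scaleR: "\<gamma> u *v (r *\<^sub>R a) = r *\<^sub>R (\<gamma> u *v a)"
  by (metis ofreal_smult vector_scalar_commute)
lemma v_smult: "\<gamma> u *v (c *s a) = c *s (\<gamma> u *v a)"
  by (rule vector_scalar_commute)
lemma v_neg: "\<gamma> u *v (- a) = - (\<gamma> u *v a)"
  by (metis add.inverse_inverse add_right_cancel matrix_vector_mult_0_right matrix_vector_right_distrib neg_eq_iff_add_eq_0)
lemma v_diff: "\<gamma> u *v (a - b) = \<gamma> u *v a - \<gamma> u *v b"
  by (rule matrix_vector_mult_diff_distrib)

end


locale ah =
  fixes J :: "'v::euclidean_space \<Rightarrow> 'v"
  assumes ahJ: "almost_hermitian J"
begin

lemma JJ[simp]: "J (J u) = - u" using ahJ by (simp add: almost_hermitian_def)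
lemma Jinner[simp]: "inner (J u) (J w) = inner u w" using ahJ by (simp add: almost_hermitian_def)
lemma Jlin: "linear J" using ahJ by (simp add: almost_hermitian_def)
lemma J_add[simp]: "J (u + w) = J u + J w" using Jlin by (simp add: linear_add)
lemma J_scale[simp]: "J (r *\<^sub>R u) = r *\<^sub>R J u" using Jlin by (simp add: linear_scale)
lemma J_neg[simp]: "J (- u) = - J u" using Jlin by (simp add: linear_neg)
lemma J_zero[simp]: "J 0 = 0" using Jlin by (simp add: linear_0)
lemma J_swap: "inner (J u) w = - inner u (J w)"
  by (metis JJ Jinner inner_minus_left)
lemma J_self[simp]: "inner u (J u) = 0"
  using J_swap[of u u] by (simp add: inner_commute)
lemma J_self'[simp]: "inner (J u) u = 0"
  using J_self by (simp add: inner_commute)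
lemma J_norm[simp]: "norm (J u) = norm u"
  by (simp add: norm_eq_sqrt_inner)
lemma J_inj: "inj J"
  by (metis JJ injI neg_equal_iff_equal)

definition adapted :: "'v set \<Rightarrow> bool" where
  "adapted F \<longleftrightarrow> finite F \<and> (\<forall>f\<in>F. norm f = 1) \<and> (\<forall>f\<in>F. \<forall>f'\<in>F. inner f (J f') = 0)
     \<and> (\<forall>f\<in>F. \<forall>f'\<in>F. f \<noteq> f' \<longrightarrow> inner f f' = 0)"

lemma adapted_exists:
  assumes "2 * k \<le> DIM('v)"
  shows "\<exists>F. adapted F \<and> card F = k"
  using assms
proof (induction k)
  case 0
  have "adapted {}" by (simp add: adapted_def)
  then show ?case by force
next
  case (Suc k)
  then obtain F where F: "adapted F" "card F = k" by auto
  let ?S = "F \<union> J ` F"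
  have fin: "finite F" using F by (simp add: adapted_def)
  have "dim ?S \<le> card ?S" using fin by (simp add: dim_le_card')
  also have "\<dots> \<le> card F + card (J ` F)" by (rule card_Un_le)
  also have "\<dots> \<le> 2 * k" using F card_image_le[OF fin, of J] by simp
  finally have "dim ?S < DIM('v)" using Suc.prems by simp
  then obtain x where x: "x \<noteq> 0" "\<And>y. y \<in> span ?S \<Longrightarrow> orthogonal x y"
    using orthogonal_to_subspace_exists by blast
  define f where "f = x /\<^sub>R norm x"
  have nf: "norm f = 1" using x by (simp add: f_def)
  have o1: "inner f y = 0" if "y \<in> ?S" for y
    using x(2)[OF span_base[OF that]] by (simp add: f_def orthogonal_def)
  have fF: "f \<notin> F" using o1 nf by (metis UnI1 inner_eq_zero_iff norm_zero zero_neq_one)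
  have "adapted (insert f F)"
    unfolding adapted_def
  proof (intro conjI ballI impI)
    show "finite (insert f F)" using fin by simp
    show "norm g = 1" if "g \<in> insert f F" for g using that nf F(1) by (auto simp: adapted_def)
    show "inner g (J g') = 0" if "g \<in> insert f F" "g' \<in> insert f F" for g g'
    proof -
      have a: "inner f (J h) = 0" if "h \<in> F" for h using o1 that by auto
      have b: "inner h (J f) = 0" if "h \<in> F" for h using a[OF that] J_swap[of h f]
        by (simp add: inner_commute)
      show ?thesis using that a b F(1) by (auto simp: adapted_def)
    qed
    show "inner g g' = 0" if "g \<in> insert f F" "g' \<in> insert f F" "g \<noteq> g'" for g g'
    proof -
      have a: "inner f h = 0" "inner h f = 0" if "h \<in> F" for h using o1[of h] that by (auto simp: inner_commute)
      show ?thesis using that a F(1) unfolding adapted_def by (metis insert_iff)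
    qed
  qed
  moreover have "card (insert f F) = Suc k" using fin fF F by simp
  ultimately show ?case by blast
qed

end


lemma basis_change:
  fixes h :: "'v::euclidean_space \<Rightarrow> 'v \<Rightarrow> 'w::real_vector"
  assumes fin: "finite B" and on: "\<forall>x\<in>B. \<forall>y\<in>B. inner x y = (if x = y then 1 else 0)"
   and exp: "\<forall>u. (\<Sum>x\<in>B. inner u x *\<^sub>R x) = u"
   and l1: "\<forall>w. linear (\<lambda>u. h u w)" and l2: "\<forall>u. linear (h u)"
  shows "(\<Sum>b\<in>Basis. h b b) = (\<Sum>x\<in>B. h x x)"
proof -
  have hs1: "h (\<Sum>x\<in>B. c x *\<^sub>R x) w = (\<Sum>x\<in>B. c x *\<^sub>R h x w)" for c w
  proof -
    have "h (\<Sum>x\<in>B. c x *\<^sub>R x) w = (\<Sum>x\<in>B. h (c x *\<^sub>R x) w)"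
      using linear_sum[OF l1[rule_format, of w], of "\<lambda>x. c x *\<^sub>R x" B] by simp
    then show ?thesis using linear_scale[OF l1[rule_format, of w]] by simp
  qed
  have hs2: "h u (\<Sum>x\<in>B. c x *\<^sub>R x) = (\<Sum>x\<in>B. c x *\<^sub>R h u x)" for c u
  proof -
    have "h u (\<Sum>x\<in>B. c x *\<^sub>R x) = (\<Sum>x\<in>B. h u (c x *\<^sub>R x))"
      using linear_sum[OF l2[rule_format, of u], of "\<lambda>x. c x *\<^sub>R x" B] by simp
    then show ?thesis using linear_scale[OF l2[rule_format, of u]] by simp
  qed
  have step1: "h b b = (\<Sum>x\<in>B. \<Sum>y\<in>B. (inner b x * inner b y) *\<^sub>R h x y)" for b
  proof -
    have "h b b = h (\<Sum>x\<in>B. inner b x *\<^sub>R x) (\<Sum>y\<in>B. inner b y *\<^sub>R y)"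
      using exp by simp
    also have "\<dots> = (\<Sum>x\<in>B. inner b x *\<^sub>R h x (\<Sum>y\<in>B. inner b y *\<^sub>R y))" by (rule hs1)
    also have "\<dots> = (\<Sum>x\<in>B. \<Sum>y\<in>B. (inner b x * inner b y) *\<^sub>R h x y)"
      by (simp add: hs2 scaleR_sum_right)
    finally show ?thesis .
  qed
  have "(\<Sum>b\<in>Basis. h b b) = (\<Sum>b\<in>Basis. \<Sum>x\<in>B. \<Sum>y\<in>B. (inner b x * inner b y) *\<^sub>R h x y)"
    by (rule sum.cong[OF refl], rule step1)
  also have "\<dots> = (\<Sum>x\<in>B. \<Sum>b\<in>Basis. \<Sum>y\<in>B. (inner b x * inner b y) *\<^sub>R h x y)"
    by (rule sum.swap)
  also have "\<dots> = (\<Sum>x\<in>B. \<Sum>y\<in>B. \<Sum>b\<in>Basis. (inner b x * inner b y) *\<^sub>R h x y)"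
    by (rule sum.cong[OF refl], rule sum.swap)
  also have "\<dots> = (\<Sum>x\<in>B. \<Sum>y\<in>B. (\<Sum>b\<in>Basis. inner b x * inner b y) *\<^sub>R h x y)"
    by (simp only: scaleR_sum_left)
  also have "\<dots> = (\<Sum>x\<in>B. \<Sum>y\<in>B. (inner x y) *\<^sub>R h x y)"
  proof -
    have e: "(\<Sum>b\<in>Basis. inner b x * inner b y) = inner x y" for x y
      by (subst euclidean_inner[of x y]) (simp add: inner_commute)
    show ?thesis by (simp only: e)
  qed
  also have "\<dots> = (\<Sum>x\<in>B. \<Sum>y\<in>B. (if x = y then h x y else 0))"
    by (rule sum.cong[OF refl], rule sum.cong[OF refl]) (simp add: on)
  also have "\<dots> = (\<Sum>x\<in>B. h x x)"
    using fin by simp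
  finally show ?thesis .
qed



context ah begin

lemma adapted_disj:
  assumes "adapted F" shows "F \<inter> J ` F = {}"
proof -
  { fix f f' assume "f \<in> F" "f' \<in> F" "f = J f'"
    then have "inner f (J f') = 0" using assms unfolding adapted_def by blast
    then have "inner f f = 0" using \<open>f = J f'\<close> by simp
    then have False using assms \<open>f \<in> F\<close> by (auto simp: adapted_def) }
  then show ?thesis by blast
qed

lemma adapted_on:
  assumes "adapted F"
  shows "\<forall>x\<in>F \<union> J ` F. \<forall>y\<in>F \<union> J ` F. inner x y = (if x = y then 1 else 0)"
proof (intro ballI)
  fix x y assume x: "x \<in> F \<union> J ` F" and y: "y \<in> F \<union> J ` F"
  have A: "\<forall>f\<in>F. norm f = 1" "\<forall>f\<in>F. \<forall>f'\<in>F. inner f (J f') = 0"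
     "\<forall>f\<in>F. \<forall>f'\<in>F. f \<noteq> f' \<longrightarrow> inner f f' = 0"
    using assms by (auto simp: adapted_def)
  have n1: "inner f f = 1" if "f \<in> F" for f
    using A(1) that by (metis norm_eq_sqrt_inner real_sqrt_eq_1_iff)
  have D: "F \<inter> J ` F = {}" by (rule adapted_disj[OF assms])
  show "inner x y = (if x = y then 1 else 0)"
  proof (cases "x \<in> F")
    case True
    show ?thesis
    proof (cases "y \<in> F")
      case True
      then show ?thesis using \<open>x \<in> F\<close> A n1 by auto
    next
      case False
      then obtain g where g: "g \<in> F" "y = J g" using y by auto
      then have "x \<noteq> y" using D \<open>x \<in> F\<close> by auto
      then show ?thesis using A g \<open>x \<in> F\<close> by auto
    qed
  next
    case False
    then obtain f where f: "f \<in> F" "x = J f" using x by auto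
    show ?thesis
    proof (cases "y \<in> F")
      case True
      then have "x \<noteq> y" using D f by auto
      then show ?thesis using A f True J_swap[of f y] by (auto simp: inner_commute)
    next
      case False
      then obtain g where g: "g \<in> F" "y = J g" using y by auto
      have "(x = y) = (f = g)" using f g J_inj by (auto dest: injD)
      then show ?thesis using A f g n1 by auto
    qed
  qed
qed

lemma adapted_card:
  assumes "adapted F" shows "card (F \<union> J ` F) = 2 * card F" "finite (F \<union> J ` F)"
proof -
  have fin: "finite F" using assms by (simp add: adapted_def)
  show "card (F \<union> J ` F) = 2 * card F"
    using card_Un_disjoint[OF fin finite_imageI[OF fin] adapted_disj[OF assms]]
      card_image[OF inj_on_subset[OF J_inj subset_UNIV]] by simp
  show "finite (F \<union> J ` F)" using fin by simp
qed

lemma adapted_expand: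
  assumes "adapted F" "2 * card F = DIM('v)"
  shows "\<forall>u. (\<Sum>x\<in>F \<union> J ` F. inner u x *\<^sub>R x) = u"
proof
  fix u
  let ?B = "F \<union> J ` F"
  have on: "\<forall>x\<in>?B. \<forall>y\<in>?B. inner x y = (if x = y then 1 else 0)" by (rule adapted_on[OF assms(1)])
  have fin: "finite ?B" and cB: "card ?B = DIM('v)" using adapted_card[OF assms(1)] assms(2) by auto
  have ind: "independent ?B"
  proof (rule pairwise_orthogonal_independent)
    show "pairwise orthogonal ?B" using on by (auto simp: pairwise_def orthogonal_def)
    show "0 \<notin> ?B" using on[rule_format, of 0 0] by auto
  qed
  have sp: "UNIV \<subseteq> span ?B"
    by (rule card_ge_dim_independent[OF subset_UNIV ind]) (simp add: cB)
  define w where "w = u - (\<Sum>x\<in>?B. inner u x *\<^sub>R x)"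
  have ow: "orthogonal w y" if "y \<in> ?B" for y
  proof -
    have "inner (\<Sum>x\<in>?B. inner u x *\<^sub>R x) y = (\<Sum>x\<in>?B. inner u x * inner x y)"
      by (simp add: inner_sum_left)
    also have "\<dots> = (\<Sum>x\<in>?B. if x = y then inner u x else 0)"
    proof (rule sum.cong[OF refl])
      fix x assume "x \<in> ?B"
      note e = on[rule_format, OF \<open>x \<in> ?B\<close> that]
      show "inner u x * inner x y = (if x = y then inner u x else 0)"
      proof (cases "x = y")
        case True
        then have "inner x y = 1" using e by (simp only: if_True simp_thms)
        then show ?thesis using True by (simp only: if_True mult_1_right simp_thms)
      next
        case False
        then have "inner x y = 0" using e by (simp only: if_False)
        then show ?thesis using False by (simp only: if_False mult_zero_right)
      qed
    qed
    also have "\<dots> = inner u y" using fin that by simp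
    finally show ?thesis by (simp add: w_def orthogonal_def inner_diff_left)
  qed
  have "w \<in> span ?B" using sp by auto
  then have "orthogonal w w" by (rule orthogonal_to_span) (rule ow)
  then show "(\<Sum>x\<in>?B. inner u x *\<^sub>R x) = u" by (simp add: w_def orthogonal_self)
qed

end


locale sp = cl \<gamma> + ah J for \<gamma> :: "'v::euclidean_space \<Rightarrow> complex^'k^'k" and J :: "'v \<Rightarrow> 'v"
begin

definition T :: "'v \<Rightarrow> complex^'k \<Rightarrow> complex^'k" where
  "T f \<phi> = \<gamma> f *v (\<gamma> (J f) *v \<phi>)"

lemma T_add: "T f (a + b) = T f a + T f b" by (simp add: T_def v_add)
lemma T_smult: "T f (c *s a) = c *s T f a" by (simp add: T_def v_smult)
lemma T_scaleR: "T f (r *\<^sub>R a) = r *\<^sub>R T f a" by (simp add: T_def v_scaleR)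
lemma T_neg: "T f (- a) = - T f a" by (simp add: T_def v_neg)
lemma T_diff: "T f (a - b) = T f a - T f b" by (simp add: T_def v_diff)
lemma T_zero[simp]: "T f 0 = 0" by (simp add: T_def)

lemma comm_orth:
  assumes "inner x k = 0" "inner x (J k) = 0"
  shows "\<gamma> x *v T k \<psi> = T k (\<gamma> x *v \<psi>)"
proof -
  have "\<gamma> x *v (\<gamma> k *v (\<gamma> (J k) *v \<psi>)) = - (\<gamma> k *v (\<gamma> x *v (\<gamma> (J k) *v \<psi>)))"
    using g_anti[of x k] assms by simp
  also have "\<gamma> x *v (\<gamma> (J k) *v \<psi>) = - (\<gamma> (J k) *v (\<gamma> x *v \<psi>))"
    using g_anti[of x "J k"] assms by simp
  finally show ?thesis by (simp add: T_def v_neg)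
qed

lemma anti_self:
  assumes "norm k = 1"
  shows "\<gamma> k *v T k \<psi> = - T k (\<gamma> k *v \<psi>)" "\<gamma> (J k) *v T k \<psi> = - T k (\<gamma> (J k) *v \<psi>)"
proof -
  have a: "\<gamma> (J k) *v (\<gamma> k *v \<phi>) = - (\<gamma> k *v (\<gamma> (J k) *v \<phi>))" for \<phi>
    using g_anti[of "J k" k] by simp
  show "\<gamma> k *v T k \<psi> = - T k (\<gamma> k *v \<psi>)"
    by (simp add: T_def a v_neg g_sq assms)
  show "\<gamma> (J k) *v T k \<psi> = - T k (\<gamma> (J k) *v \<psi>)"
    by (simp add: T_def a v_neg g_sq assms)
qed

lemma TT: assumes "norm k = 1" shows "T k (T k \<psi>) = - \<psi>"
proof -
  have a: "\<gamma> (J k) *v (\<gamma> k *v \<phi>) = - (\<gamma> k *v (\<gamma> (J k) *v \<phi>))" for \<phi>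
    using g_anti[of "J k" k] by simp
  show ?thesis by (simp add: T_def a v_neg g_sq assms v_scaleR)
qed

lemma V_rel:
  assumes "norm f = 1" "T f \<phi> = s *s \<phi>"
  shows "\<gamma> (J f) *v \<phi> = - (s *s (\<gamma> f *v \<phi>))"
proof -
  have "\<gamma> f *v T f \<phi> = - (\<gamma> (J f) *v \<phi>)" by (simp add: T_def g_sq assms)
  then show ?thesis using assms(2) by (simp add: v_smult)
qed

definition sg :: "'v \<Rightarrow> 'v \<Rightarrow> complex" where "sg f k = (if f = k then -1 else 1)"

lemma C1:
  assumes F: "adapted F" and f: "f \<in> F" and k: "k \<in> F" and x: "x = f \<or> x = J f"
  shows "T k (\<gamma> x *v \<phi>) = sg f k *s (\<gamma> x *v T k \<phi>)"
proof (cases "f = k")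
  case True
  have "norm k = 1" using F k by (auto simp: adapted_def)
  then show ?thesis using True x anti_self[of k \<phi>] by (auto simp: sg_def)
next
  case False
  have o: "inner f k = 0" "inner f (J k) = 0" using F f k False by (auto simp: adapted_def)
  have "inner x k = 0 \<and> inner x (J k) = 0"
    using x o J_swap[of f k] by auto
  then show ?thesis using False comm_orth[of x k \<phi>] by (simp add: sg_def)
qed

lemma T_comm:
  assumes F: "adapted F" and f: "f \<in> F" and k: "k \<in> F" and "f \<noteq> k"
  shows "T k (T f \<phi>) = T f (T k \<phi>)"
proof -
  have "T k (T f \<phi>) = sg f k *s (\<gamma> f *v T k (\<gamma> (J f) *v \<phi>))"
    unfolding T_def[of f] using C1[OF F f k] by simp
  also have "\<dots> = sg f k *s (\<gamma> f *v (sg f k *s (\<gamma> (J f) *v T k \<phi>)))"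
    using C1[OF F f k, of "J f"] by simp
  also have "\<dots> = T f (T k \<phi>)" using assms(4) by (simp add: sg_def T_def v_smult)
  finally show ?thesis .
qed

end


context sp begin

lemma eig_exists_aux:
  assumes F: "adapted F"
  shows "finite G \<Longrightarrow> G \<subseteq> F \<Longrightarrow> (\<forall>f\<in>G. \<sigma> f = \<i> \<or> \<sigma> f = - \<i>) \<Longrightarrow>
     \<exists>\<psi>. \<psi> \<noteq> 0 \<and> (\<forall>f\<in>G. T f \<psi> = \<sigma> f *s \<psi>)"
proof (induction G rule: finite_induct)
  case empty
  have "(1::complex^'k) \<noteq> 0" by (simp add: vec_eq_iff)
  then show ?case by blast
next
  case (insert g G)
  then obtain \<psi> where \<psi>: "\<psi> \<noteq> 0" "\<forall>f\<in>G. T f \<psi> = \<sigma> f *s \<psi>" by auto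
  have gF: "g \<in> F" using insert by auto
  have ng: "norm g = 1" using F gF by (auto simp: adapted_def)
  define s where "s = \<sigma> g"
  have ss: "s * s = -1" using insert.prems by (auto simp: s_def)
  have TTg: "T g (T g \<psi>) = - \<psi>" by (rule TT[OF ng])
  define \<phi>1 where "\<phi>1 = \<psi> - s *s T g \<psi>"
  define \<phi>2 where "\<phi>2 = \<psi> + s *s T g \<psi>"
  have e1: "T g \<phi>1 = s *s \<phi>1"
    by (simp add: \<phi>1_def T_diff T_smult TTg vector_ssub_ldistrib vector_smult_assoc ss vector_smult_rneg)
  have e2: "T g \<phi>2 = (- s) *s \<phi>2"
    by (simp add: \<phi>2_def T_add T_smult TTg vector_add_ldistrib vector_smult_assoc ss vector_smult_rneg vector_smult_lneg)
  have com: "T f (T g \<psi>) = \<sigma> f *s T g \<psi>" if "f \<in> G" for f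
  proof -
    have "f \<in> F" "f \<noteq> g" using that insert by auto
    then have "T f (T g \<psi>) = T g (T f \<psi>)" using T_comm[OF F gF] by auto
    then show ?thesis using \<psi>(2) that by (simp add: T_smult)
  qed
  have G1: "\<forall>f\<in>G. T f \<phi>1 = \<sigma> f *s \<phi>1"
    using \<psi>(2) com by (simp add: \<phi>1_def T_diff T_smult vector_ssub_ldistrib vector_smult_assoc mult.commute)
  have G2: "\<forall>f\<in>G. T f \<phi>2 = \<sigma> f *s \<phi>2"
    using \<psi>(2) com by (simp add: \<phi>2_def T_add T_smult vector_add_ldistrib vector_smult_assoc mult.commute)
  show ?case
  proof (cases "\<phi>1 = 0")
    case False
    then show ?thesis using e1 G1 by (auto simp: s_def)
  next
    case True
    have "\<phi>1 + \<phi>2 = 2 *s \<psi>" by (simp add: \<phi>1_def \<phi>2_def vec_eq_iff)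
    then have n2: "\<phi>2 \<noteq> 0" using True \<psi>(1) by simp
    define ch where "ch = \<gamma> g *v \<phi>2"
    have "\<gamma> g *v ch = - \<phi>2" by (simp add: ch_def g_sq ng)
    then have "ch \<noteq> 0" using n2 by auto
    moreover have "T g ch = s *s ch"
      using C1[OF F gF gF, of g \<phi>2] e2 by (simp add: ch_def sg_def v_smult v_neg)
    moreover have "T f ch = \<sigma> f *s ch" if "f \<in> G" for f
    proof -
      have "f \<in> F" "f \<noteq> g" using that insert by auto
      then show ?thesis using C1[OF F gF \<open>f \<in> F\<close>, of g \<phi>2] G2 that
        by (simp add: ch_def sg_def v_smult)
    qed
    ultimately show ?thesis by (auto simp: s_def)
  qed
qed

end


lemma sum_mvec: "(sum M S) *v x = (\<Sum>i\<in>S. M i *v (x::complex^'k))"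
proof (cases "finite S")
  case True then show ?thesis
    by (induction S rule: finite_induct) (simp_all add: matrix_vector_mult_add_rdistrib)
qed simp

lemma lin_half: "linear f \<Longrightarrow> linear (\<lambda>x. (f x / 2) *\<^sub>R (V::'w::real_vector))"
  by (rule linearI) (simp_all add: linear_add linear_scale add_divide_distrib scaleR_add_left)

lemma lin_scale_const: "linear g \<Longrightarrow> linear (\<lambda>x. (a::real) *\<^sub>R g x)"
  by (rule linearI) (simp_all add: linear_add linear_scale scaleR_add_right)

context sp begin

definition hh :: "('v \<Rightarrow> 'v \<Rightarrow> real) \<Rightarrow> complex^'k \<Rightarrow> 'v \<Rightarrow> 'v \<Rightarrow> complex^'k" where
  "hh \<eta> \<psi> x y = (\<eta> x y / 2) *\<^sub>R (\<gamma> x *v (\<gamma> y *v \<psi>))"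

lemma cliff2_vec: "cliff2 \<gamma> \<eta> *v \<psi> = (\<Sum>b\<in>Basis. \<Sum>c\<in>Basis. hh \<eta> \<psi> b c)"
  unfolding cliff2_def hh_def
  by (simp only: sum_mvec matrix_vector_mul_assoc[symmetric] mat_mult_vec ofreal_smult)

lemma lin_g2: "linear (\<lambda>c. \<gamma> b *v (\<gamma> c *v \<psi>))"
  using linear_compose[OF g_lin[of \<psi>] matrix_vector_mul_linear[of "\<gamma> b"]] by (simp add: o_def)

lemma cliff2_B:
  assumes F: "adapted F" "2 * card F = DIM('v)" and tf: "two_form \<eta>"
  shows "cliff2 \<gamma> \<eta> *v \<psi> = (\<Sum>x\<in>F \<union> J ` F. \<Sum>y\<in>F \<union> J ` F. hh \<eta> \<psi> x y)"
proof -
  let ?B = "F \<union> J ` F"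
  have fin: "finite ?B" using adapted_card[OF F(1)] by simp
  note on = adapted_on[OF F(1)]
  note ex = adapted_expand[OF F]
  have l1: "linear (\<eta> u)" and l2: "linear (\<lambda>x. \<eta> x v)" for u v using tf unfolding two_form_def by blast+
  have inner: "(\<Sum>c\<in>Basis. hh \<eta> \<psi> b c) = (\<Sum>y\<in>?B. hh \<eta> \<psi> b y)" for b
  proof -
    have "(\<Sum>c\<in>Basis. (\<lambda>c c'. (\<eta> b c / 2) *\<^sub>R (\<gamma> b *v (\<gamma> c' *v \<psi>))) c c)
        = (\<Sum>y\<in>?B. (\<lambda>c c'. (\<eta> b c / 2) *\<^sub>R (\<gamma> b *v (\<gamma> c' *v \<psi>))) y y)"
    proof (rule basis_change[OF fin on ex, where h="\<lambda>c c'. (\<eta> b c / 2) *\<^sub>R (\<gamma> b *v (\<gamma> c' *v \<psi>))"])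
      show "\<forall>w. linear (\<lambda>u. (\<lambda>c c'. (\<eta> b c / 2) *\<^sub>R (\<gamma> b *v (\<gamma> c' *v \<psi>))) u w)"
        by (intro allI lin_half l1)
      show "\<forall>u. linear ((\<lambda>c c'. (\<eta> b c / 2) *\<^sub>R (\<gamma> b *v (\<gamma> c' *v \<psi>))) u)"
        by (intro allI lin_scale_const lin_g2)
    qed
    then show ?thesis by (simp add: hh_def)
  qed
  have outer: "(\<Sum>b\<in>Basis. hh \<eta> \<psi> b y) = (\<Sum>x\<in>?B. hh \<eta> \<psi> x y)" for y
  proof -
    have "(\<Sum>b\<in>Basis. (\<lambda>c c'. (\<eta> c y / 2) *\<^sub>R (\<gamma> c' *v (\<gamma> y *v \<psi>))) b b)
        = (\<Sum>x\<in>?B. (\<lambda>c c'. (\<eta> c y / 2) *\<^sub>R (\<gamma> c' *v (\<gamma> y *v \<psi>))) x x)"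
    proof (rule basis_change[OF fin on ex, where h="\<lambda>c c'. (\<eta> c y / 2) *\<^sub>R (\<gamma> c' *v (\<gamma> y *v \<psi>))"])
      show "\<forall>w. linear (\<lambda>u. (\<lambda>c c'. (\<eta> c y / 2) *\<^sub>R (\<gamma> c' *v (\<gamma> y *v \<psi>))) u w)"
        by (intro allI lin_half l2)
      show "\<forall>u. linear ((\<lambda>c c'. (\<eta> c y / 2) *\<^sub>R (\<gamma> c' *v (\<gamma> y *v \<psi>))) u)"
        by (intro allI lin_scale_const g_lin)
    qed
    then show ?thesis by (simp add: hh_def)
  qed
  have "cliff2 \<gamma> \<eta> *v \<psi> = (\<Sum>b\<in>Basis. \<Sum>y\<in>?B. hh \<eta> \<psi> b y)"
    by (simp add: cliff2_vec inner)
  also have "\<dots> = (\<Sum>y\<in>?B. \<Sum>b\<in>Basis. hh \<eta> \<psi> b y)" by (rule sum.swap)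
  also have "\<dots> = (\<Sum>y\<in>?B. \<Sum>x\<in>?B. hh \<eta> \<psi> x y)" by (simp add: outer)
  also have "\<dots> = (\<Sum>x\<in>?B. \<Sum>y\<in>?B. hh \<eta> \<psi> x y)" by (rule sum.swap)
  finally show ?thesis .
qed

lemma split_B:
  assumes F: "adapted F"
  shows "(\<Sum>x\<in>F \<union> J ` F. p x) = (\<Sum>f\<in>F. p f + p (J f))"
proof -
  have fin: "finite F" using F by (simp add: adapted_def)
  have "(\<Sum>x\<in>F \<union> J ` F. p x) = (\<Sum>x\<in>F. p x) + (\<Sum>x\<in>J ` F. p x)"
    by (rule sum.union_disjoint) (simp_all add: fin adapted_disj[OF F])
  also have "(\<Sum>x\<in>J ` F. p x) = (\<Sum>f\<in>F. p (J f))"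
    by (rule sum.reindex_cong[of J]) (auto intro: inj_on_subset[OF J_inj])
  finally show ?thesis by (simp add: sum.distrib)
qed

definition Q :: "('v \<Rightarrow> 'v \<Rightarrow> real) \<Rightarrow> complex^'k \<Rightarrow> 'v \<Rightarrow> 'v \<Rightarrow> complex^'k" where
  "Q \<eta> \<psi> f f' = hh \<eta> \<psi> f f' + hh \<eta> \<psi> f (J f') + hh \<eta> \<psi> (J f) f' + hh \<eta> \<psi> (J f) (J f')"

lemma cliff2_F:
  assumes F: "adapted F" "2 * card F = DIM('v)" and tf: "two_form \<eta>"
  shows "cliff2 \<gamma> \<eta> *v \<psi> = (\<Sum>f\<in>F. \<Sum>f'\<in>F. Q \<eta> \<psi> f f')"
proof -
  have "cliff2 \<gamma> \<eta> *v \<psi> = (\<Sum>x\<in>F \<union> J ` F. \<Sum>f'\<in>F. hh \<eta> \<psi> x f' + hh \<eta> \<psi> x (J f'))"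
  proof -
    have "\<And>x. (\<Sum>y\<in>F \<union> J ` F. hh \<eta> \<psi> x y) = (\<Sum>f'\<in>F. hh \<eta> \<psi> x f' + hh \<eta> \<psi> x (J f'))"
      by (rule split_B[OF F(1)])
    then show ?thesis by (simp only: cliff2_B[OF F tf])
  qed
  also have "\<dots> = (\<Sum>f\<in>F. (\<Sum>f'\<in>F. hh \<eta> \<psi> f f' + hh \<eta> \<psi> f (J f')) + (\<Sum>f'\<in>F. hh \<eta> \<psi> (J f) f' + hh \<eta> \<psi> (J f) (J f')))"
    by (rule split_B[OF F(1)])
  also have "\<dots> = (\<Sum>f\<in>F. \<Sum>f'\<in>F. Q \<eta> \<psi> f f')"
    by (rule sum.cong[OF refl]) (simp add: Q_def sum.distrib add.assoc)
  finally show ?thesis .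
qed

end


lemma double_delta:
  assumes "finite F" "k \<in> F" "l \<in> F" "k \<noteq> l"
  shows "(\<Sum>f\<in>F. \<Sum>f'\<in>F. (if (f = k \<and> f' = l) \<or> (f = l \<and> f' = k) then X f f' else (0::'a::comm_monoid_add)))
     = X k l + X l k"
proof -
  have e: "(if (f = k \<and> f' = l) \<or> (f = l \<and> f' = k) then X f f' else 0) =
      (if f' = l then (if f = k then X k l else 0) else 0) + (if f' = k then (if f = l then X l k else 0) else 0)"
    for f f' using assms(4) by auto
  show ?thesis using assms by (simp add: e sum.distrib)
qed

lemma scaleR_smult_comm: "r *\<^sub>R (c *s (v::complex^'k)) = c *s (r *\<^sub>R v)"
  by (simp add: vec_eq_iff)

context sp begin

definition Rf :: "'v \<Rightarrow> complex \<Rightarrow> complex^'k \<Rightarrow> complex^'k" where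
  "Rf f s \<phi> = T f \<phi> - s *s \<phi>"

lemma Rf_lin: "linear (Rf f s)"
  by (rule linearI) (simp_all add: Rf_def T_add T_scaleR vector_add_ldistrib scaleR_smult_comm algebra_simps)

lemma Rf_smult: "Rf f s (c *s a) = c *s Rf f s a"
  by (simp add: Rf_def T_smult vector_ssub_ldistrib vector_smult_assoc mult.commute)

lemma Rf_zero[simp]: "Rf f s 0 = 0" by (simp add: Rf_def)

lemma term_T:
  assumes F: "adapted F" and f: "f \<in> F" and f': "f' \<in> F" and k: "k \<in> F"
    and x: "x = f \<or> x = J f" and y: "y = f' \<or> y = J f'"
    and eig: "T k \<psi> = s *s \<psi>"
  shows "T k (\<gamma> x *v (\<gamma> y *v \<psi>)) = (sg f k * sg f' k * s) *s (\<gamma> x *v (\<gamma> y *v \<psi>))"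
  using C1[OF F f k x, of "\<gamma> y *v \<psi>"] C1[OF F f' k y, of \<psi>] eig
  by (simp add: v_smult vector_smult_assoc mult.assoc)

lemma Rf_hh:
  assumes F: "adapted F" and f: "f \<in> F" and f': "f' \<in> F" and k: "k \<in> F"
    and x: "x = f \<or> x = J f" and y: "y = f' \<or> y = J f'"
    and eig: "T k \<psi> = s *s \<psi>"
  shows "Rf k s (hh \<eta> \<psi> x y) = ((sg f k * sg f' k - 1) * s) *s hh \<eta> \<psi> x y"
proof -
  have "Rf k s (\<gamma> x *v (\<gamma> y *v \<psi>)) = ((sg f k * sg f' k - 1) * s) *s (\<gamma> x *v (\<gamma> y *v \<psi>))"
    using term_T[OF assms] by (simp add: Rf_def algebra_simps vector_sub_rdistrib)
  then show ?thesis
    unfolding hh_def using linear_scale[OF Rf_lin] by (simp add: scaleR_smult_comm)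
qed

lemma Rf_Q:
  assumes F: "adapted F" and f: "f \<in> F" and f': "f' \<in> F" and k: "k \<in> F"
    and eig: "T k \<psi> = s *s \<psi>"
  shows "Rf k s (Q \<eta> \<psi> f f') = ((sg f k * sg f' k - 1) * s) *s Q \<eta> \<psi> f f'"
  unfolding Q_def
  using Rf_hh[OF F f f' k _ _ eig] by (simp add: linear_add[OF Rf_lin] vector_add_ldistrib)

end


context sp begin

lemma nonzero_g:
  assumes "norm x = 1" "\<phi> \<noteq> 0" shows "\<gamma> x *v \<phi> \<noteq> 0"
proof
  assume "\<gamma> x *v \<phi> = 0"
  then have "\<gamma> x *v (\<gamma> x *v \<phi>) = 0" by simp
  then show False using assms by (simp add: g_sq)
qed

lemma key:
  assumes F: "adapted F" "2 * card F = DIM('v)" and eta: "form11 J \<eta>"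
    and nz: "\<psi> \<noteq> 0" and eig: "\<forall>f\<in>F. T f \<psi> = \<sigma> f *s \<psi>"
    and k: "k \<in> F" and l: "l \<in> F" and kl: "k \<noteq> l" and sk: "\<sigma> k = \<i>" and sl: "\<sigma> l = - \<i>"
    and z: "cliff2 \<gamma> \<eta> *v \<psi> = 0"
  shows "\<eta> k l = 0 \<and> \<eta> k (J l) = 0"
proof -
  have tf: "two_form \<eta>" using eta by (simp add: form11_def)
  have fin: "finite F" using F by (simp add: adapted_def)
  have exp: "cliff2 \<gamma> \<eta> *v \<psi> = (\<Sum>f\<in>F. \<Sum>f'\<in>F. Q \<eta> \<psi> f f')" by (rule cliff2_F[OF F tf])
  define RR where "RR = (\<lambda>\<phi>. Rf k \<i> (Rf l (- \<i>) \<phi>))"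
  have linRR: "linear RR" unfolding RR_def
    using linear_compose[OF Rf_lin Rf_lin] by (simp add: o_def)
  have RRQ: "RR (Q \<eta> \<psi> f f') =
     (if (f = k \<and> f' = l) \<or> (f = l \<and> f' = k) then 4 *s Q \<eta> \<psi> f f' else 0)" if f: "f \<in> F" and f': "f' \<in> F" for f f'
  proof -
    have ek: "T k \<psi> = \<i> *s \<psi>" and el: "T l \<psi> = (- \<i>) *s \<psi>" using eig k l sk sl by auto
    have "RR (Q \<eta> \<psi> f f') = (((sg f l * sg f' l - 1) * (- \<i>)) * ((sg f k * sg f' k - 1) * \<i>)) *s Q \<eta> \<psi> f f'"
      unfolding RR_def by (simp only: Rf_Q[OF F(1) f f' l el] Rf_Q[OF F(1) f f' k ek] Rf_smult vector_smult_assoc)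
    also have "((sg f l * sg f' l - 1) * (- \<i>)) * ((sg f k * sg f' k - 1) * \<i>) =
        (if (f = k \<and> f' = l) \<or> (f = l \<and> f' = k) then 4 else 0)"
      using kl by (auto simp: sg_def)
    finally show ?thesis by simp
  qed
  have "RR (cliff2 \<gamma> \<eta> *v \<psi>) = (\<Sum>f\<in>F. \<Sum>f'\<in>F. RR (Q \<eta> \<psi> f f'))"
    by (simp add: exp linear_sum[OF linRR])
  also have "\<dots> = (\<Sum>f\<in>F. \<Sum>f'\<in>F. (if (f = k \<and> f' = l) \<or> (f = l \<and> f' = k) then 4 *s Q \<eta> \<psi> f f' else 0))"
    by (intro sum.cong refl) (simp add: RRQ)
  also have "\<dots> = 4 *s Q \<eta> \<psi> k l + 4 *s Q \<eta> \<psi> l k"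
    by (rule double_delta[OF fin k l kl])
  finally have "4 *s Q \<eta> \<psi> k l + 4 *s Q \<eta> \<psi> l k = 0"
    using z linear_0[OF linRR] by simp
  then have S0: "Q \<eta> \<psi> k l + Q \<eta> \<psi> l k = 0"
    by (metis vector_add_ldistrib vector_mul_eq_0 zero_neq_numeral)
  have nk: "norm k = 1" and nl: "norm l = 1" using F k l by (auto simp: adapted_def)
  have lin2: "linear (\<eta> u)" for u using tf unfolding two_form_def by blast
  have anti: "\<eta> u v = - \<eta> v u" for u v using tf unfolding two_form_def by blast
  have Jinv: "\<eta> (J u) (J v) = \<eta> u v" for u v using eta unfolding form11_def by blast
  have a1: "\<eta> (J k) (J l) = \<eta> k l" by (rule Jinv)
  have a2: "\<eta> l k = - \<eta> k l" by (rule anti)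
  have a3: "\<eta> (J l) (J k) = - \<eta> k l" by (simp add: Jinv anti[of l k])
  have a4: "\<eta> l (J k) = \<eta> k (J l)"
  proof -
    have "\<eta> l (J k) = \<eta> (J l) (J (J k))" by (simp only: Jinv)
    also have "\<dots> = - \<eta> (J l) k" by (simp add: linear_neg[OF lin2])
    also have "\<dots> = \<eta> k (J l)" using anti[of "J l" k] by simp
    finally show ?thesis .
  qed
  have a5: "\<eta> (J k) l = - \<eta> k (J l)" using anti[of "J k" l] a4 by simp
  have a6: "\<eta> (J l) k = - \<eta> k (J l)" by (rule anti)
  define w where "w = \<gamma> k *v (\<gamma> l *v \<psi>)"
  have wnz: "w \<noteq> 0" unfolding w_def by (intro nonzero_g nk nl nz)
  have ek: "T k \<psi> = \<i> *s \<psi>" and el: "T l \<psi> = (- \<i>) *s \<psi>" using eig k l sk sl by auto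
  have ekl: "T k (\<gamma> l *v \<psi>) = \<i> *s (\<gamma> l *v \<psi>)"
    using C1[OF F(1) l k, of l \<psi>] kl ek by (simp add: sg_def v_smult)
  have elk: "T l (\<gamma> k *v \<psi>) = (- \<i>) *s (\<gamma> k *v \<psi>)"
    using C1[OF F(1) k l, of k \<psi>] kl el by (simp add: sg_def v_smult v_neg)
  have Jl: "\<gamma> (J l) *v \<psi> = \<i> *s (\<gamma> l *v \<psi>)" using V_rel[OF nl el] by (simp add: vector_smult_lneg)
  have Jk: "\<gamma> (J k) *v \<psi> = (- \<i>) *s (\<gamma> k *v \<psi>)" using V_rel[OF nk ek] by (simp add: vector_smult_lneg)
  have Jkl: "\<gamma> (J k) *v (\<gamma> l *v \<psi>) = (- \<i>) *s w" using V_rel[OF nk ekl] by (simp add: w_def vector_smult_lneg)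
  have lk: "\<gamma> l *v (\<gamma> k *v \<psi>) = - w"
    using g_anti[of l k \<psi>] F k l kl by (simp add: w_def adapted_def)
  have Jlk: "\<gamma> (J l) *v (\<gamma> k *v \<psi>) = (- \<i>) *s w" using V_rel[OF nl elk] lk
    by (simp add: vector_smult_lneg vector_smult_rneg)
  have g1: "\<gamma> k *v (\<gamma> l *v \<psi>) = w" by (simp add: w_def)
  have g2: "\<gamma> k *v (\<gamma> (J l) *v \<psi>) = \<i> *s w" by (simp add: Jl v_smult w_def)
  have g4: "\<gamma> (J k) *v (\<gamma> (J l) *v \<psi>) = w" by (simp add: Jl v_smult Jkl vector_smult_assoc)
  have g6: "\<gamma> l *v (\<gamma> (J k) *v \<psi>) = \<i> *s w" by (simp add: Jk v_smult v_neg lk vector_smult_rneg)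
  have g8: "\<gamma> (J l) *v (\<gamma> (J k) *v \<psi>) = - w" by (simp add: Jk v_smult v_neg Jlk vector_smult_assoc)
  have E: "Q \<eta> \<psi> k l + Q \<eta> \<psi> l k = (2 * (complex_of_real (\<eta> k l) + \<i> * complex_of_real (\<eta> k (J l)))) *s w"
    unfolding Q_def hh_def
    by (simp add: g1 g2 Jkl g4 lk g6 Jlk g8 a1 a2 a3 a4 a5 a6 vec_eq_iff scaleR_conv_of_real[where 'a=complex] algebra_simps)
  then have "(2 * (complex_of_real (\<eta> k l) + \<i> * complex_of_real (\<eta> k (J l)))) *s w = 0"
    using S0 by metis
  then have "2 * (complex_of_real (\<eta> k l) + \<i> * complex_of_real (\<eta> k (J l))) = 0"
    using wnz vector_mul_eq_0 by blast
  then have "complex_of_real (\<eta> k l) + \<i> * complex_of_real (\<eta> k (J l)) = 0"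
    by (simp only: mult_eq_0_iff) simp
  then show ?thesis by (simp add: complex_eq_iff)
qed

end


lemma sum_smult_vec: "(\<Sum>i\<in>S. c i *s (v::complex^'k)) = (\<Sum>i\<in>S. c i) *s v"
  by (simp add: vec_eq_iff sum_component sum_distrib_right)

context sp begin

lemma diag:
  assumes F: "adapted F" "2 * card F = DIM('v)" and eta: "form11 J \<eta>"
    and off: "\<forall>f\<in>F. \<forall>f'\<in>F. f \<noteq> f' \<longrightarrow> \<eta> f f' = 0 \<and> \<eta> f (J f') = 0"
    and eig: "\<forall>f\<in>F. T f \<psi> = \<sigma> f *s \<psi>"
  shows "cliff2 \<gamma> \<eta> *v \<psi> = (\<Sum>f\<in>F. complex_of_real (\<eta> f (J f)) * \<sigma> f) *s \<psi>"
proof -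
  have tf: "two_form \<eta>" using eta by (simp add: form11_def)
  have fin: "finite F" using F by (simp add: adapted_def)
  have anti: "\<eta> u v = - \<eta> v u" for u v using tf unfolding two_form_def by blast
  have Jinv: "\<eta> (J u) (J v) = \<eta> u v" for u v using eta unfolding form11_def by blast
  have self0: "\<eta> u u = 0" for u using anti[of u u] by simp
  have Q0: "Q \<eta> \<psi> f f' = 0" if "f \<in> F" "f' \<in> F" "f \<noteq> f'" for f f'
  proof -
    have "\<eta> f f' = 0" "\<eta> f (J f') = 0" "\<eta> f' (J f) = 0" using off that by auto
    then have "\<eta> (J f) f' = 0" "\<eta> (J f) (J f') = 0" using anti[of "J f" f'] Jinv[of f f'] by auto
    then show ?thesis using \<open>\<eta> f f' = 0\<close> \<open>\<eta> f (J f') = 0\<close> by (simp add: Q_def hh_def)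
  qed
  have Qff: "Q \<eta> \<psi> f f = (complex_of_real (\<eta> f (J f)) * \<sigma> f) *s \<psi>" if f: "f \<in> F" for f
  proof -
    have "\<gamma> (J f) *v (\<gamma> f *v \<psi>) = - T f \<psi>"
      using g_anti[of "J f" f \<psi>] by (simp add: T_def)
    then have "hh \<eta> \<psi> (J f) f = (\<eta> f (J f) / 2) *\<^sub>R T f \<psi>"
      using anti[of "J f" f] by (simp add: hh_def)
    moreover have "hh \<eta> \<psi> f (J f) = (\<eta> f (J f) / 2) *\<^sub>R T f \<psi>" by (simp add: hh_def T_def)
    moreover have "hh \<eta> \<psi> f f = 0" "hh \<eta> \<psi> (J f) (J f) = 0" by (simp_all add: hh_def self0)
    ultimately have "Q \<eta> \<psi> f f = \<eta> f (J f) *\<^sub>R T f \<psi>"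
      by (simp add: Q_def scaleR_add_left[symmetric])
    then show ?thesis using eig f by (simp add: scaleR_smult_comm vec_eq_iff scaleR_conv_of_real[where 'a=complex])
  qed
  have "cliff2 \<gamma> \<eta> *v \<psi> = (\<Sum>f\<in>F. \<Sum>f'\<in>F. Q \<eta> \<psi> f f')" by (rule cliff2_F[OF F tf])
  also have "\<dots> = (\<Sum>f\<in>F. \<Sum>f'\<in>F. if f' = f then Q \<eta> \<psi> f f else 0)"
    by (intro sum.cong refl) (auto simp: Q0)
  also have "\<dots> = (\<Sum>f\<in>F. (complex_of_real (\<eta> f (J f)) * \<sigma> f) *s \<psi>)"
    using fin by (simp add: Qff)
  also have "\<dots> = (\<Sum>f\<in>F. complex_of_real (\<eta> f (J f)) * \<sigma> f) *s \<psi>" by (rule sum_smult_vec)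
  finally show ?thesis .
qed

end


lemma count_sum:
  assumes "finite F" "P \<subseteq> F"
  shows "(\<Sum>f\<in>F. if f \<in> P then \<i> else - \<i>) = \<i> * (2 * of_nat (card P) - of_nat (card F))"
proof -
  have fP: "finite P" using assms finite_subset by blast
  have "(\<Sum>f\<in>F. if f \<in> P then \<i> else - \<i>) = (\<Sum>f\<in>F - P. if f \<in> P then \<i> else - \<i>) + (\<Sum>f\<in>P. if f \<in> P then \<i> else - \<i>)"
    by (rule sum.subset_diff[OF assms(2) assms(1)])
  also have "(\<Sum>f\<in>F - P. if f \<in> P then \<i> else - \<i>) = (\<Sum>f\<in>F - P. - \<i>)" by (rule sum.cong) auto
  also have "(\<Sum>f\<in>P. if f \<in> P then \<i> else - \<i>) = (\<Sum>f\<in>P. \<i>)" by (rule sum.cong) auto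
  also have "card (F - P) = card F - card P" by (rule card_Diff_subset[OF fP assms(2)])
  moreover have "card P \<le> card F" by (rule card_mono[OF assms(1,2)])
  ultimately show ?thesis by (simp add: of_nat_diff algebra_simps)
qed

lemma delta2:
  assumes "finite F" "k \<in> F" "l \<in> F" "k \<noteq> l"
  shows "(\<Sum>f\<in>F. c f * (if f = k then a else if f = l then b else 0)) = c k * a + c l * (b::complex)"
proof -
  have e: "c f * (if f = k then a else if f = l then b else 0) = (if f = k then c k * a else 0) + (if f = l then c l * b else 0)" for f
    using assms(4) by auto
  show ?thesis using assms by (simp add: e sum.distrib)
qed

context sp begin

lemma kaehler_form11: "form11 J (kaehler_form J)"
  unfolding form11_def two_form_def kaehler_form_def
proof (intro conjI allI)
  show "linear (\<lambda>v. inner u (J v))" for u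
    by (rule linearI) (simp_all add: inner_add_right)
  show "linear (\<lambda>x. inner x (J v))" for v
    by (rule linearI) (simp_all add: inner_add_left)
  show "inner u (J v) = - inner v (J u)" for u v
    using J_swap[of v u] by (simp add: inner_commute)
  show "inner (J u) (J (J v)) = inner u (J v)" for u v by (rule Jinner)
qed

lemma main_sp:
  fixes n :: nat and \<eta> :: "'v \<Rightarrow> 'v \<Rightarrow> real"
  assumes n1: "n \<ge> 1"
    and dim: "DIM('v) = 2 * (2 * n)"
    and eta: "form11 J \<eta>"
    and hyp: "\<forall>\<phi> \<in> {a + b | a b. a \<in> spinor_S \<gamma> J (2 * n) (n - 1) \<and> b \<in> spinor_S \<gamma> J (2 * n) n}.
           cliff2 \<gamma> \<eta> *v \<phi> = 0"
  shows "\<eta> = (\<lambda>u v. 0)"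
proof -
  obtain F where F0: "adapted F" "card F = 2 * n" using adapted_exists[of "2 * n"] dim by auto
  have F: "adapted F" "2 * card F = DIM('v)" using F0 dim by auto
  have fin: "finite F" using F by (simp add: adapted_def)
  have tf: "two_form \<eta>" using eta by (simp add: form11_def)
  have anti: "\<eta> u v = - \<eta> v u" for u v using tf unfolding two_form_def by blast
  have Jinv: "\<eta> (J u) (J v) = \<eta> u v" for u v using eta unfolding form11_def by blast
  define sP where "sP P = (\<lambda>f. if f \<in> P then \<i> else - \<i>)" for P :: "'v set"
  have psi_ex: "\<exists>\<psi>. \<psi> \<noteq> 0 \<and> (\<forall>f\<in>F. T f \<psi> = sP P f *s \<psi>)" for P
    using eig_exists_aux[OF F(1) fin, of "sP P"] by (auto simp: sP_def)
  have Om_off: "\<forall>f\<in>F. \<forall>f'\<in>F. f \<noteq> f' \<longrightarrow> kaehler_form J f f' = 0 \<and> kaehler_form J f (J f') = 0"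
    using F(1) by (auto simp: adapted_def kaehler_form_def)
  have Om_diag: "kaehler_form J f (J f) = -1" if "f \<in> F" for f
    using F(1) that by (auto simp: adapted_def kaehler_form_def power2_norm_eq_inner[symmetric])
  have inS: "\<psi> \<in> spinor_S \<gamma> J (2 * n) (card P)"
    if P: "P \<subseteq> F" and e: "\<forall>f\<in>F. T f \<psi> = sP P f *s \<psi>" for P \<psi>
  proof -
    have "cliff2 \<gamma> (kaehler_form J) *v \<psi> = (\<Sum>f\<in>F. complex_of_real (kaehler_form J f (J f)) * sP P f) *s \<psi>"
      by (rule diag[OF F kaehler_form11 Om_off e])
    also have "(\<Sum>f\<in>F. complex_of_real (kaehler_form J f (J f)) * sP P f) = - (\<Sum>f\<in>F. sP P f)"
      by (simp add: Om_diag sum_negf[symmetric])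
    also have "(\<Sum>f\<in>F. sP P f) = \<i> * (2 * of_nat (card P) - of_nat (card F))"
      unfolding sP_def by (rule count_sum[OF fin P])
    finally show ?thesis using F0(2) by (simp add: spinor_S_def algebra_simps)
  qed
  have zS: "0 \<in> spinor_S \<gamma> J m j" for m j by (simp add: spinor_S_def)
  have kill: "cliff2 \<gamma> \<eta> *v \<psi> = 0"
    if P: "P \<subseteq> F" "card P = n \<or> card P = n - 1" and e: "\<forall>f\<in>F. T f \<psi> = sP P f *s \<psi>" for P \<psi>
  proof -
    have S: "\<psi> \<in> spinor_S \<gamma> J (2 * n) (card P)" by (rule inS[OF P(1) e])
    show ?thesis
    proof (cases "card P = n")
      case True
      then have "0 + \<psi> \<in> {a + b | a b. a \<in> spinor_S \<gamma> J (2 * n) (n - 1) \<and> b \<in> spinor_S \<gamma> J (2 * n) n}"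
        using S zS by blast
      then show ?thesis using hyp by simp
    next
      case False
      then have "\<psi> + 0 \<in> {a + b | a b. a \<in> spinor_S \<gamma> J (2 * n) (n - 1) \<and> b \<in> spinor_S \<gamma> J (2 * n) n}"
        using S zS P(2) by fastforce
      then show ?thesis using hyp by simp
    qed
  qed
  have split_ex: "\<exists>Q. Q \<subseteq> F - {k, l} \<and> card Q = n - 1 \<and> finite Q" if "k \<in> F" "l \<in> F" "k \<noteq> l" for k l
  proof -
    have "card (F - {k, l}) = 2 * n - 2" using that fin F0(2) by (simp add: card_Diff_subset)
    then have "n - 1 \<le> card (F - {k, l})" by simp
    then show ?thesis by (metis obtain_subset_with_card_n)
  qed
  have off: "\<eta> k l = 0 \<and> \<eta> k (J l) = 0" if kl: "k \<in> F" "l \<in> F" "k \<noteq> l" for k l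
  proof -
    obtain Q where Q: "Q \<subseteq> F - {k, l}" "card Q = n - 1" "finite Q" using split_ex[OF kl] by blast
    let ?P = "insert k Q"
    have P: "?P \<subseteq> F" using Q kl by auto
    have "k \<notin> Q" using Q(1) by auto
    then have cP: "card ?P = n" using Q n1 by simp
    obtain \<psi> where \<psi>: "\<psi> \<noteq> 0" "\<forall>f\<in>F. T f \<psi> = sP ?P f *s \<psi>" using psi_ex by blast
    have z: "cliff2 \<gamma> \<eta> *v \<psi> = 0" using kill[OF P _ \<psi>(2)] cP by simp
    show ?thesis
      by (rule key[OF F eta \<psi> kl _ _ z]) (use Q kl in \<open>auto simp: sP_def\<close>)
  qed
  have offall: "\<forall>f\<in>F. \<forall>f'\<in>F. f \<noteq> f' \<longrightarrow> \<eta> f f' = 0 \<and> \<eta> f (J f') = 0" using off by blast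
  define d where "d f = complex_of_real (\<eta> f (J f))" for f
  have dsum: "(\<Sum>f\<in>F. d f * sP P f) = 0" if P: "P \<subseteq> F" "card P = n \<or> card P = n - 1" for P
  proof -
    obtain \<psi> where \<psi>: "\<psi> \<noteq> 0" "\<forall>f\<in>F. T f \<psi> = sP P f *s \<psi>" using psi_ex by blast
    have "(\<Sum>f\<in>F. d f * sP P f) *s \<psi> = 0"
      using diag[OF F eta offall \<psi>(2)] kill[OF P \<psi>(2)] by (simp add: d_def)
    then show ?thesis using \<psi>(1) by simp
  qed
  have deq: "d k = d l" if kl: "k \<in> F" "l \<in> F" "k \<noteq> l" for k l
  proof -
    obtain Q where Q: "Q \<subseteq> F - {k, l}" "card Q = n - 1" "finite Q" using split_ex[OF kl] by blast
    have "k \<notin> Q" "l \<notin> Q" using Q(1) by auto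
    then have c1: "card (insert k Q) = n" "card (insert l Q) = n" using Q n1 by simp_all
    have s1: "(\<Sum>f\<in>F. d f * sP (insert k Q) f) = 0" by (rule dsum) (use Q kl c1 in auto)
    have s2: "(\<Sum>f\<in>F. d f * sP (insert l Q) f) = 0" by (rule dsum) (use Q kl c1 in auto)
    have "(\<Sum>f\<in>F. d f * (if f = k then 2 * \<i> else if f = l then - 2 * \<i> else 0)) =
        (\<Sum>f\<in>F. d f * sP (insert k Q) f) - (\<Sum>f\<in>F. d f * sP (insert l Q) f)"
      unfolding sum_subtractf[symmetric]
    proof (rule sum.cong[OF refl])
      fix f assume "f \<in> F"
      show "d f * (if f = k then 2 * \<i> else if f = l then - 2 * \<i> else 0) = d f * sP (insert k Q) f - d f * sP (insert l Q) f"
        using Q kl by (auto simp: sP_def algebra_simps)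
    qed
    then have "d k * (2 * \<i>) + d l * (- 2 * \<i>) = 0" using s1 s2 delta2[OF fin kl] by simp
    then show ?thesis by (simp add: algebra_simps)
  qed
  have dzero: "d f = 0" if f: "f \<in> F" for f
  proof -
    have "n - 1 \<le> card F" using F0 by simp
    then obtain P where P: "P \<subseteq> F" "card P = n - 1" "finite P" by (metis obtain_subset_with_card_n)
    have "(\<Sum>g\<in>F. d g * sP P g) = (\<Sum>g\<in>F. d f * sP P g)"
      by (rule sum.cong[OF refl]) (metis deq f)
    also have "\<dots> = d f * (\<Sum>g\<in>F. sP P g)" by (simp add: sum_distrib_left)
    also have "(\<Sum>g\<in>F. sP P g) = \<i> * (2 * of_nat (card P) - of_nat (card F))"
      unfolding sP_def by (rule count_sum[OF fin P(1)])
    also have "\<dots> = - 2 * \<i>" using P(2) F0(2) n1 by (simp add: of_nat_diff algebra_simps)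
    finally have "d f * (- 2 * \<i>) = 0" using dsum[OF P(1)] P(2) by simp
    then show ?thesis by simp
  qed
  have allF: "\<eta> f f' = 0 \<and> \<eta> f (J f') = 0" if "f \<in> F" "f' \<in> F" for f f'
  proof (cases "f = f'")
    case True
    have "\<eta> f f = 0" using anti[of f f] by simp
    moreover have "\<eta> f (J f) = 0" using dzero[OF that(1)] by (simp add: d_def)
    ultimately show ?thesis using True by simp
  qed (use off that in auto)
  let ?B = "F \<union> J ` F"
  have allB: "\<eta> x y = 0" if xB: "x \<in> ?B" and yB: "y \<in> ?B" for x y
  proof -
    obtain f where f: "f \<in> F" "x = f \<or> x = J f" using xB by blast
    obtain f' where f': "f' \<in> F" "y = f' \<or> y = J f'" using yB by blast
    have "\<eta> (J f) f' = 0" using anti[of "J f" f'] allF[OF f'(1) f(1)] by simp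
    moreover have "\<eta> (J f) (J f') = 0" using Jinv[of f f'] allF[OF f(1) f'(1)] by simp
    ultimately show ?thesis using f f' allF[OF f(1) f'(1)] by auto
  qed
  have ex: "\<forall>u. (\<Sum>x\<in>?B. inner u x *\<^sub>R x) = u" by (rule adapted_expand[OF F])
  have l1: "linear (\<lambda>x. \<eta> x v)" and l2: "linear (\<eta> u)" for u v using tf unfolding two_form_def by blast+
  have zx: "\<eta> x v = 0" if "x \<in> ?B" for x v
  proof -
    have "\<eta> x v = \<eta> x (\<Sum>y\<in>?B. inner v y *\<^sub>R y)" using ex by simp
    also have "\<dots> = (\<Sum>y\<in>?B. inner v y *\<^sub>R \<eta> x y)"
      using linear_sum[OF l2[of x], of "\<lambda>y. inner v y *\<^sub>R y" ?B] linear_scale[OF l2[of x]] by simp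
    also have "\<dots> = 0" using allB[OF that] by simp
    finally show ?thesis .
  qed
  have "\<eta> u v = 0" for u v
  proof -
    have "\<eta> u v = \<eta> (\<Sum>x\<in>?B. inner u x *\<^sub>R x) v" using ex by simp
    also have "\<dots> = (\<Sum>x\<in>?B. inner u x *\<^sub>R \<eta> x v)"
      using linear_sum[OF l1[of v], of "\<lambda>x. inner u x *\<^sub>R x" ?B] linear_scale[OF l1[of v]] by simp
    also have "\<dots> = 0" using zx by simp
    finally show ?thesis .
  qed
  then show ?thesis by (intro ext)
qed

end

theorem mainTheorem11:
  fixes J :: "'v::euclidean_space \<Rightarrow> 'v"
    and \<gamma> :: "'v \<Rightarrow> complex^'k^'k"
    and n :: nat
    and \<eta> :: "'v \<Rightarrow> 'v \<Rightarrow> real"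
  assumes "n \<ge> 1"
    and "DIM('v) = 2 * (2 * n)"
    and "almost_hermitian J"
    and "spinor_rep \<gamma>"
    and "form11 J \<eta>"
    and "\<forall>\<phi> \<in> {a + b | a b. a \<in> spinor_S \<gamma> J (2 * n) (n - 1) \<and> b \<in> spinor_S \<gamma> J (2 * n) n}.
           cliff2 \<gamma> \<eta> *v \<phi> = 0"
  shows "\<eta> = (\<lambda>u v. 0)"
proof -
  interpret sp \<gamma> J
    using assms(3,4) by (simp add: sp_def cl_def ah_def spinor_rep_def)
  show ?thesis by (rule main_sp[OF assms(1,2,5,6)])
qed



end
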